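(* Let $G$ be a DCG that contains $k$ pairwise vertex-disjoint cycles, each of length at least $3$. Then $|\mathrm{MEC}(G)|\ge 2^k$.
   Context: A DCG is a directed graph without self-loops (cycles allowed). A cycle of length $\ell$ is a sequence of distinct vertices $(v_1,\dots,v_\ell)$ with edges $v_i\to v_{i+1}$ for $i<\ell$ and $v_\ell\to v_1$. Markov equivalence: a path between $a\ne b$ is a sequence of vertices (repeats allowed) with a specified directed edge (either direction) between consecutive vertices; an internal vertex is a collider if both adjacent path-edges point into it; the path is active given $Z$ if every internal non-collider is outside $Z$ and every collider is in $Z$ or has a descendant (itself or a vertex reachable by a directed path) in $Z$; $a,b$ are d-separated given $Z$ if no active path exists; two graphs are Markov equivalent if they have the same d-separations. $\mathrm{MEC}(G)$ is the set of DCGs on the same vertex set Markov equivalent to $G$. *)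

theory Defs
  imports Main
begin

definition dcg :: "'a set \<Rightarrow> ('a \<times> 'a) set \<Rightarrow> bool" where
  "dcg V E \<longleftrightarrow> finite V \<and> E \<subseteq> V \<times> V \<and> (\<forall>v. (v, v) \<notin> E)"

definition is_cycle :: "('a \<times> 'a) set \<Rightarrow> 'a list \<Rightarrow> bool" where
  "is_cycle E c \<longleftrightarrow> c \<noteq> [] \<and> distinct c \<and>
     (\<forall>i. Suc i < length c \<longrightarrow> (c ! i, c ! Suc i) \<in> E) \<and>
     (last c, hd c) \<in> E"

text \<open>A path is a vertex list vs together with a direction list ds;
  ds ! i = True means the path-edge between vs!i and vs!(i+1) is vs!i -> vs!(i+1),
  False means vs!(i+1) -> vs!i.  Vertices may repeat.\<close>
definition is_path :: "('a \<times> 'a) set \<Rightarrow> 'a list \<Rightarrow> bool list \<Rightarrow> bool" where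
  "is_path E vs ds \<longleftrightarrow> length vs \<ge> 2 \<and> length ds = length vs - 1 \<and>
     (\<forall>i < length ds. (if ds ! i then (vs ! i, vs ! Suc i) \<in> E else (vs ! Suc i, vs ! i) \<in> E))"

text \<open>Internal vertex at position i (0 < i < length vs - 1) is a collider iff both adjacent path-edges point into it.\<close>
definition collider :: "'a list \<Rightarrow> bool list \<Rightarrow> nat \<Rightarrow> bool" where
  "collider vs ds i \<longleftrightarrow> ds ! (i - 1) \<and> \<not> ds ! i"

definition active_path :: "('a \<times> 'a) set \<Rightarrow> 'a set \<Rightarrow> 'a list \<Rightarrow> bool list \<Rightarrow> bool" where
  "active_path E Z vs ds \<longleftrightarrow> is_path E vs ds \<and>
     (\<forall>i. 0 < i \<and> Suc i < length vs \<longrightarrow>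
        (if collider vs ds i then (\<exists>z \<in> Z. (vs ! i, z) \<in> E\<^sup>*) else vs ! i \<notin> Z))"

definition d_separated :: "('a \<times> 'a) set \<Rightarrow> 'a \<Rightarrow> 'a \<Rightarrow> 'a set \<Rightarrow> bool" where
  "d_separated E a b Z \<longleftrightarrow>
     \<not> (\<exists>vs ds. active_path E Z vs ds \<and> hd vs = a \<and> last vs = b)"

definition markov_equiv :: "'a set \<Rightarrow> ('a \<times> 'a) set \<Rightarrow> ('a \<times> 'a) set \<Rightarrow> bool" where
  "markov_equiv V E E' \<longleftrightarrow>
     (\<forall>a \<in> V. \<forall>b \<in> V. \<forall>Z. a \<noteq> b \<and> Z \<subseteq> V \<longrightarrow>
        (d_separated E a b Z \<longleftrightarrow> d_separated E' a b Z))"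

definition MEC :: "'a set \<Rightarrow> ('a \<times> 'a) set \<Rightarrow> ('a \<times> 'a) set set" where
  "MEC V E = {E'. dcg V E' \<and> markov_equiv V E E'}"

end

theory Submission
  imports Defs
begin

inductive wk :: "('a \<times> 'a) set \<Rightarrow> 'a set \<Rightarrow> 'a \<Rightarrow> 'a \<Rightarrow> bool \<Rightarrow> bool"
  for E Z a where
  sh: "(a,u) \<in> E \<Longrightarrow> wk E Z a u True"
| st: "(u,a) \<in> E \<Longrightarrow> wk E Z a u False"
| fw: "wk E Z a u m \<Longrightarrow> u \<notin> Z \<Longrightarrow> (u,w) \<in> E \<Longrightarrow> wk E Z a w True"
| bw: "wk E Z a u m \<Longrightarrow> (w,u) \<in> E \<Longrightarrow>
        (if m then (\<exists>z\<in>Z. (u,z) \<in> E\<^sup>*) else u \<notin> Z) \<Longrightarrow> wk E Z a w False"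

lemma active_wk_aux:
  assumes ap: "active_path E Z vs ds"
  shows "2 \<le> n \<Longrightarrow> n \<le> length vs \<Longrightarrow> wk E Z (vs!0) (vs!(n-1)) (ds!(n-2))"
proof (induction n rule: nat_induct_at_least)
  case base
  from ap have "length ds = length vs - 1" "length vs \<ge> 2"
    and e: "\<forall>i < length ds. (if ds ! i then (vs ! i, vs ! Suc i) \<in> E else (vs ! Suc i, vs ! i) \<in> E)"
    by (auto simp: active_path_def is_path_def)
  hence "0 < length ds" by auto
  with e have "(if ds ! 0 then (vs ! 0, vs ! 1) \<in> E else (vs ! 1, vs ! 0) \<in> E)" by auto
  then show ?case by (cases "ds!0") (auto intro: wk.intros)
next
  case (Suc n)
  from ap have l: "length ds = length vs - 1"
    and e: "\<forall>i < length ds. (if ds ! i then (vs ! i, vs ! Suc i) \<in> E else (vs ! Suc i, vs ! i) \<in> E)"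
    and c: "\<forall>i. 0 < i \<and> Suc i < length vs \<longrightarrow>
        (if collider vs ds i then (\<exists>z \<in> Z. (vs ! i, z) \<in> E\<^sup>*) else vs ! i \<notin> Z)"
    by (auto simp: active_path_def is_path_def)
  have IH: "wk E Z (vs!0) (vs!(n-1)) (ds!(n-2))" using Suc by auto
  have i: "n - 1 < length ds" using Suc l by auto
  have cc: "(if collider vs ds (n-1) then (\<exists>z \<in> Z. (vs ! (n-1), z) \<in> E\<^sup>*) else vs ! (n-1) \<notin> Z)"
    using c Suc by auto
  have col: "collider vs ds (n-1) = (ds!(n-2) \<and> \<not> ds!(n-1))"
    using Suc by (simp add: collider_def numeral_2_eq_2)
  have sn: "Suc (n-1) = n" "Suc n - 1 = n" "Suc n - 2 = n - 1" using Suc by auto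
  show ?case
  proof (cases "ds!(n-1)")
    case True
    with e i have "(vs!(n-1), vs!n) \<in> E" using sn by (metis)
    moreover have "vs!(n-1) \<notin> Z" using cc col True by auto
    ultimately show ?thesis using IH True sn by (auto intro: wk.fw)
  next
    case False
    with e i have "(vs!n, vs!(n-1)) \<in> E" using sn by (metis)
    moreover have "(if ds!(n-2) then (\<exists>z\<in>Z. (vs!(n-1),z) \<in> E\<^sup>*) else vs!(n-1) \<notin> Z)"
      using cc col False by auto
    ultimately have "wk E Z (vs!0) (vs!n) False" using wk.bw[OF IH] by (metis sn(1))
    then show ?thesis using False sn by simp
  qed
qed

lemma active_wk:
  assumes "active_path E Z vs ds"
  shows "wk E Z (hd vs) (last vs) (last ds)"
proof -
  from assms have l: "length ds = length vs - 1" "length vs \<ge> 2"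
    by (auto simp: active_path_def is_path_def)
  have "wk E Z (vs!0) (vs!(length vs-1)) (ds!(length vs-2))"
    using active_wk_aux[OF assms, of "length vs"] l by auto
  moreover have "hd vs = vs!0" using l by (cases vs) auto
  moreover have "vs \<noteq> []" using l by auto
  moreover have "last vs = vs!(length vs - 1)" using calculation by (simp add: last_conv_nth)
  moreover have "last ds = ds!(length vs - 2)" using l
    by (subst last_conv_nth) (auto simp: numeral_2_eq_2)
  ultimately show ?thesis by simp
qed

lemma active_snoc:
  assumes ap: "active_path E Z vs ds"
    and e: "if d then (last vs, w) \<in> E else (w, last vs) \<in> E"
    and c: "if last ds \<and> \<not> d then (\<exists>z \<in> Z. (last vs, z) \<in> E\<^sup>*) else last vs \<notin> Z"
  shows "active_path E Z (vs @ [w]) (ds @ [d])"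
proof -
  from ap have l: "length ds = length vs - 1" "length vs \<ge> 2"
    and ee: "\<forall>i < length ds. (if ds ! i then (vs ! i, vs ! Suc i) \<in> E else (vs ! Suc i, vs ! i) \<in> E)"
    and cc: "\<forall>i. 0 < i \<and> Suc i < length vs \<longrightarrow>
        (if collider vs ds i then (\<exists>z \<in> Z. (vs ! i, z) \<in> E\<^sup>*) else vs ! i \<notin> Z)"
    by (auto simp: active_path_def is_path_def)
  have "vs \<noteq> []" using l by auto
  then have lv: "last vs = vs ! length ds" using l by (simp add: last_conv_nth)
  have ld: "last ds = ds ! (length ds - 1)" using l by (subst last_conv_nth) auto
  have P: "is_path E (vs @ [w]) (ds @ [d])"
    unfolding is_path_def
  proof (intro conjI allI impI)
    show "2 \<le> length (vs @ [w])" using l by auto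
    show "length (ds @ [d]) = length (vs @ [w]) - 1" using l by auto
    fix i assume i: "i < length (ds @ [d])"
    show "if (ds @ [d]) ! i then ((vs @ [w]) ! i, (vs @ [w]) ! Suc i) \<in> E
          else ((vs @ [w]) ! Suc i, (vs @ [w]) ! i) \<in> E"
    proof (cases "i < length ds")
      case True
      then have "i < length vs" "Suc i < length vs" using l by auto
      then show ?thesis using ee True by (auto simp: nth_append)
    next
      case False
      then have "i = length ds" using i by auto
      then show ?thesis using e l lv by (auto simp: nth_append)
    qed
  qed
  show ?thesis unfolding active_path_def
  proof (intro conjI allI impI P)
    fix i assume i: "0 < i \<and> Suc i < length (vs @ [w])"
    show "if collider (vs @ [w]) (ds @ [d]) i then \<exists>z\<in>Z. ((vs @ [w]) ! i, z) \<in> E\<^sup>*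
          else (vs @ [w]) ! i \<notin> Z"
    proof (cases "Suc i < length vs")
      case True
      then have "collider (vs @ [w]) (ds @ [d]) i = collider vs ds i"
        using l i by (auto simp: collider_def nth_append)
      then show ?thesis using cc True i by (auto simp: nth_append)
    next
      case False
      then have ii: "i = length ds" using i l by auto
      then have "collider (vs @ [w]) (ds @ [d]) i = (last ds \<and> \<not> d)"
        using l i ld by (auto simp: collider_def nth_append)
      then show ?thesis using c ii lv l by (auto simp: nth_append)
    qed
  qed
qed

lemma wk_active:
  "wk E Z a u m \<Longrightarrow> \<exists>vs ds. active_path E Z vs ds \<and> hd vs = a \<and> last vs = u \<and> last ds = m"
proof (induction rule: wk.induct)
  case (sh u)
  have "active_path E Z [a,u] [True]" using sh
    by (auto simp: active_path_def is_path_def)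
  then show ?case by fastforce
next
  case (st u)
  have "active_path E Z [a,u] [False]" using st
    by (auto simp: active_path_def is_path_def)
  then show ?case by fastforce
next
  case (fw u m w)
  then obtain vs ds where "active_path E Z vs ds" "hd vs = a" "last vs = u" "last ds = m" by blast
  moreover have "length vs \<ge> 2" using calculation by (auto simp: active_path_def is_path_def)
  ultimately have "active_path E Z (vs @ [w]) (ds @ [True])"
    using fw by (intro active_snoc) auto
  then show ?case using \<open>hd vs = a\<close> \<open>length vs \<ge> 2\<close> by (intro exI[of _ "vs@[w]"] exI[of _ "ds@[True]"]) (auto simp: hd_append)
next
  case (bw u m w)
  then obtain vs ds where "active_path E Z vs ds" "hd vs = a" "last vs = u" "last ds = m" by blast
  moreover have "length vs \<ge> 2" using calculation by (auto simp: active_path_def is_path_def)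
  ultimately have "active_path E Z (vs @ [w]) (ds @ [False])"
    using bw by (intro active_snoc) (auto split: if_splits)
  then show ?case using \<open>hd vs = a\<close> \<open>length vs \<ge> 2\<close> by (intro exI[of _ "vs@[w]"] exI[of _ "ds@[False]"]) (auto simp: hd_append)
qed

lemma dsep_wk: "(\<not> d_separated E a b Z) \<longleftrightarrow> (\<exists>m. wk E Z a b m)"
  unfolding d_separated_def
  using active_wk wk_active by metis

definition anc :: "('a \<times> 'a) set \<Rightarrow> 'a set \<Rightarrow> 'a set" where
  "anc E X = {x. \<exists>y\<in>X. (x,y) \<in> E\<^sup>*}"

definition madj :: "('a \<times> 'a) set \<Rightarrow> 'a set \<Rightarrow> 'a \<Rightarrow> 'a \<Rightarrow> bool" where
  "madj E A x y \<longleftrightarrow> x \<noteq> y \<and> ((x,y) \<in> E \<or> (y,x) \<in> E \<or> (\<exists>c\<in>A. (x,c) \<in> E \<and> (y,c) \<in> E))"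

inductive mreach :: "('a \<times> 'a) set \<Rightarrow> 'a set \<Rightarrow> 'a set \<Rightarrow> 'a \<Rightarrow> 'a \<Rightarrow> bool"
  for E Z A a where
  m0: "mreach E Z A a a"
| ms: "mreach E Z A a u \<Longrightarrow> (u = a \<or> u \<notin> Z) \<Longrightarrow> madj E A u w \<Longrightarrow> w \<in> A \<Longrightarrow> mreach E Z A a w"

lemma mreach_mono:
  assumes "mreach E Z A a x" "A \<subseteq> A'"
  shows "mreach E Z A' a x"
  using assms(1)
proof (induction rule: mreach.induct)
  case m0 then show ?case by (rule mreach.m0)
next
  case (ms u w)
  then have "madj E A' u w" using assms(2) by (auto simp: madj_def)
  with ms assms(2) show ?case by (auto intro: mreach.ms)
qed

lemma anc_mem: "x \<in> X \<Longrightarrow> x \<in> anc E X" by (auto simp: anc_def)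
lemma anc_step: "(y,x) \<in> E \<Longrightarrow> x \<in> anc E X \<Longrightarrow> y \<in> anc E X"
  by (auto simp: anc_def intro: converse_rtrancl_into_rtrancl)
lemma anc_rt: "(y,x) \<in> E\<^sup>* \<Longrightarrow> x \<in> anc E X \<Longrightarrow> y \<in> anc E X"
  by (auto simp: anc_def intro: rtrancl_trans)
lemma anc_mono: "X \<subseteq> Y \<Longrightarrow> anc E X \<subseteq> anc E Y"
  by (auto simp: anc_def)
lemma anc_sub: "X \<subseteq> anc E Y \<Longrightarrow> anc E X \<subseteq> anc E Y"
  by (auto simp: anc_def intro: rtrancl_trans)

lemma lemma1:
  assumes irr: "\<forall>v. (v,v) \<notin> E"
  shows "wk E Z a u m \<Longrightarrow>
    (m \<longrightarrow> (\<exists>x. mreach E Z (anc E ({a} \<union> Z) \<union> anc E {u}) a x \<and> (x = a \<or> x \<notin> Z) \<and> (x,u) \<in> E)) \<and>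
    (\<not> m \<longrightarrow> mreach E Z (anc E ({a} \<union> Z) \<union> anc E {u}) a u \<and> u \<in> anc E ({a} \<union> Z))"
proof (induction rule: wk.induct)
  case (sh u)
  then show ?case by (auto intro: mreach.m0)
next
  case (st u)
  have "madj E (anc E ({a} \<union> Z) \<union> anc E {u}) a u" using st irr by (auto simp: madj_def)
  moreover have "u \<in> anc E ({a} \<union> Z)" using anc_step[OF st, of "{a} \<union> Z"] anc_mem[of a "{a} \<union> Z" E] by blast
  ultimately show ?case by (auto intro: mreach.ms mreach.m0)
next
  case (fw u m w)
  let ?A0 = "anc E ({a} \<union> Z)"
  have uw: "u \<in> anc E {w}" using anc_step[OF \<open>(u,w) \<in> E\<close>, of "{w}"] anc_mem[of w "{w}" E] by blast
  then have "anc E {u} \<subseteq> anc E {w}" using anc_sub[of "{u}" E "{w}"] by auto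
  then have sub: "?A0 \<union> anc E {u} \<subseteq> ?A0 \<union> anc E {w}" by auto
  have "mreach E Z (?A0 \<union> anc E {w}) a u"
  proof (cases m)
    case False
    then show ?thesis using fw mreach_mono[OF _ sub] by auto
  next
    case True
    then obtain x where x: "mreach E Z (?A0 \<union> anc E {u}) a x" "x = a \<or> x \<notin> Z" "(x,u) \<in> E"
      using fw by auto
    have "madj E (?A0 \<union> anc E {w}) x u" using x irr by (auto simp: madj_def)
    then show ?thesis using mreach.ms[OF mreach_mono[OF x(1) sub] x(2)] uw by auto
  qed
  then show ?case using fw by auto
next
  case (bw u m w)
  let ?A0 = "anc E ({a} \<union> Z)"
  have wu: "w \<noteq> u" using bw irr by auto
  show ?case
  proof (cases m)
    case False
    then have IH: "mreach E Z (?A0 \<union> anc E {u}) a u" "u \<in> ?A0" "u \<notin> Z" using bw by auto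
    have w0: "w \<in> ?A0" using \<open>(w,u) \<in> E\<close> IH(2) by (rule anc_step)
    have sub: "?A0 \<union> anc E {u} \<subseteq> ?A0 \<union> anc E {w}"
      using IH(2) anc_sub[of "{u}" E "{a} \<union> Z"] by auto
    have "madj E (?A0 \<union> anc E {w}) u w" using bw wu by (auto simp: madj_def)
    then have "mreach E Z (?A0 \<union> anc E {w}) a w"
      using mreach.ms[OF mreach_mono[OF IH(1) sub]] IH(3) by (auto intro: anc_mem)
    then show ?thesis using w0 False by auto
  next
    case True
    then obtain x where x: "mreach E Z (?A0 \<union> anc E {u}) a x" "x = a \<or> x \<notin> Z" "(x,u) \<in> E"
      using bw by auto
    have u0: "u \<in> ?A0" using bw True by (auto simp: anc_def)
    have w0: "w \<in> ?A0" using \<open>(w,u) \<in> E\<close> u0 by (rule anc_step)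
    have sub: "?A0 \<union> anc E {u} \<subseteq> ?A0 \<union> anc E {w}"
      using u0 anc_sub[of "{u}" E "{a} \<union> Z"] by auto
    have "mreach E Z (?A0 \<union> anc E {w}) a w"
    proof (cases "x = w")
      case True
      then show ?thesis using mreach_mono[OF x(1) sub] by simp
    next
      case False
      have "madj E (?A0 \<union> anc E {w}) x w" using False x bw u0 by (auto simp: madj_def)
      then show ?thesis using mreach.ms[OF mreach_mono[OF x(1) sub] x(2)] by (auto intro: anc_mem)
    qed
    then show ?thesis using w0 True by auto
  qed
qed

lemma lemma1_final:
  assumes irr: "\<forall>v. (v,v) \<notin> E" and w: "wk E Z a b m"
  shows "mreach E Z (anc E ({a,b} \<union> Z)) a b"
proof -
  have sub: "anc E ({a} \<union> Z) \<union> anc E {b} \<subseteq> anc E ({a,b} \<union> Z)"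
    using anc_mono[of "{a} \<union> Z" "{a,b} \<union> Z" E] anc_mono[of "{b}" "{a,b} \<union> Z" E] by auto
  show ?thesis
  proof (cases m)
    case False
    then show ?thesis using lemma1[OF irr w] mreach_mono[OF _ sub] by auto
  next
    case True
    then obtain x where x: "mreach E Z (anc E ({a} \<union> Z) \<union> anc E {b}) a x" "x = a \<or> x \<notin> Z" "(x,b) \<in> E"
      using lemma1[OF irr w] by auto
    have "madj E (anc E ({a,b} \<union> Z)) x b" using x irr by (auto simp: madj_def)
    then show ?thesis using mreach.ms[OF mreach_mono[OF x(1) sub] x(2)] by (auto intro: anc_mem)
  qed
qed

lemma Nb:
  assumes "(y,b) \<in> F\<^sup>*" "a \<noteq> b"
  shows "y \<notin> anc F Z \<Longrightarrow> (y = a \<or> wk F Z a y True \<or> wk F Z a y False) \<Longrightarrow> \<exists>m. wk F Z a b m"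
  using assms(1)
proof (induction rule: converse_rtrancl_induct)
  case base
  then show ?case using assms(2) by auto
next
  case (step y y')
  have yZ: "y \<notin> Z" using step(4) by (auto intro: anc_mem)
  have "y' \<notin> anc F Z" using step(1,4) anc_step by metis
  moreover have "wk F Z a y' True" using step(1,5) yZ by (metis wk.sh wk.fw)
  ultimately show ?case using step(3) by auto
qed

lemma Na:
  assumes "(y,a) \<in> F\<^sup>*"
  shows "y \<notin> anc F Z \<Longrightarrow> y = a \<or> wk F Z a y False"
  using assms
proof (induction rule: converse_rtrancl_induct)
  case base then show ?case by auto
next
  case (step y y')
  have y'Z: "y' \<notin> anc F Z" using step(1,4) anc_step by metis
  then have "y' \<notin> Z" by (auto intro: anc_mem)
  then show ?case using step(1) step(3)[OF y'Z] by (metis wk.st wk.bw)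
qed

lemma Nlem:
  assumes "wk F Z a c True" "c \<in> anc F ({a,b} \<union> Z)" "a \<noteq> b"
  shows "(\<exists>m. wk F Z a b m) \<or> c \<in> anc F Z \<or> c = a \<or> (c \<notin> Z \<and> wk F Z a c False)"
proof (cases "c \<in> anc F Z")
  case False
  then have cZ: "c \<notin> Z" by (auto intro: anc_mem)
  from assms(2) False obtain y where "y = a \<or> y = b" "(c,y) \<in> F\<^sup>*" by (auto simp: anc_def)
  then show ?thesis using Na[of c a F Z] Nb[of c b F a Z] False assms cZ by auto
qed auto

definition Good where
  "Good F Z a b u \<longleftrightarrow> (\<exists>m. wk F Z a b m) \<or> u = a \<or> wk F Z a u False \<or> (wk F Z a u True \<and> u \<in> anc F Z)"

lemma lemma2:
  assumes ab: "a \<noteq> b"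
  shows "mreach F Z (anc F ({a,b} \<union> Z)) a u \<Longrightarrow> Good F Z a b u"
proof (induction rule: mreach.induct)
  case m0 then show ?case by (auto simp: Good_def)
next
  case (ms u w)
  let ?A = "anc F ({a,b} \<union> Z)"
  show ?case
  proof (cases "\<exists>m. wk F Z a b m")
    case True then show ?thesis by (auto simp: Good_def)
  next
    case nd: False
    have G: "u = a \<or> wk F Z a u False \<or> (wk F Z a u True \<and> u \<in> anc F Z)"
      using \<open>Good F Z a b u\<close> nd by (simp add: Good_def)
    have fwd: "wk F Z a y True" if y: "(u,y) \<in> F" for y
    proof (cases "u = a")
      case True then show ?thesis using y wk.sh by metis
    next
      case False
      then have "u \<notin> Z" using \<open>u = a \<or> u \<notin> Z\<close> by auto
      then show ?thesis using G False y wk.fw by metis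
    qed
    have bwd: "wk F Z a y False" if y: "(y,u) \<in> F" for y
    proof (cases "u = a")
      case True then show ?thesis using y wk.st by metis
    next
      case False
      then have "u \<notin> Z" using \<open>u = a \<or> u \<notin> Z\<close> by auto
      show ?thesis using G
      proof (elim disjE conjE)
        assume "wk F Z a u False" then show ?thesis using wk.bw[of F Z a u False y] y \<open>u \<notin> Z\<close> by simp
      next
        assume "wk F Z a u True" "u \<in> anc F Z"
        then show ?thesis using wk.bw[of F Z a u True y] y by (simp add: anc_def)
      qed (use False in simp)
    qed
    have norm: "Good F Z a b y" if "wk F Z a y True" "y \<in> ?A" for y
      using Nlem[OF that ab] that by (auto simp: Good_def)
    from \<open>madj F ?A u w\<close> consider "(u,w) \<in> F" | "(w,u) \<in> F" | c where "c \<in> ?A" "(u,c) \<in> F" "(w,c) \<in> F"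
      by (auto simp: madj_def)
    then show ?thesis
    proof cases
      case 1 then show ?thesis using fwd norm \<open>w \<in> ?A\<close> by auto
    next
      case 2 then show ?thesis using bwd by (auto simp: Good_def)
    next
      case 3
      then have wc: "wk F Z a c True" using fwd by auto
      from Nlem[OF wc 3(1) ab] nd consider "c \<in> anc F Z" | "c = a" | "c \<notin> Z \<and> wk F Z a c False"
        by auto
      then show ?thesis
      proof cases
        case 1 then show ?thesis using wk.bw[OF wc 3(3)] by (auto simp: Good_def anc_def)
      next
        case 2 then show ?thesis using 3 wk.st[of w a F Z] by (simp add: Good_def)
      next
        case 3 then show ?thesis using wk.bw[of F Z a c False w] \<open>(w,c) \<in> F\<close> by (auto simp: Good_def)
      qed
    qed
  qed
qed

lemma mreach_transfer:
  assumes "\<forall>x\<in>A. \<forall>y\<in>A. madj E A x y = madj F A x y" "a \<in> A"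
  shows "mreach E Z A a u \<Longrightarrow> mreach F Z A a u"
proof (induction rule: mreach.induct)
  case m0 then show ?case by (rule mreach.m0)
next
  case (ms u w)
  have "u \<in> A" using ms(1) assms(2) by (cases rule: mreach.cases) auto
  then show ?case using ms assms(1) by (auto intro: mreach.ms)
qed

lemma general_equiv:
  assumes irrE: "\<forall>v. (v,v) \<notin> E" and irrF: "\<forall>v. (v,v) \<notin> F"
    and rt: "E\<^sup>* = F\<^sup>*"
    and H: "\<And>X. \<forall>x\<in>anc E X. \<forall>y\<in>anc E X. madj E (anc E X) x y = madj F (anc E X) x y"
    and ab: "a \<noteq> b"
  shows "d_separated E a b Z = d_separated F a b Z"
proof -
  have aF: "anc F X = anc E X" for X using rt by (simp add: anc_def)
  let ?A = "anc E ({a,b} \<union> Z)"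
  have aA: "a \<in> ?A" by (rule anc_mem) simp
  have H1: "\<forall>x\<in>?A. \<forall>y\<in>?A. madj E ?A x y = madj F ?A x y" by (rule H)
  have H2: "\<forall>x\<in>?A. \<forall>y\<in>?A. madj F ?A x y = madj E ?A x y" using H1 by simp
  have 1: "\<exists>m. wk F Z a b m" if "wk E Z a b m" for m
  proof -
    have "mreach E Z ?A a b" by (rule lemma1_final[OF irrE that])
    then have "mreach F Z ?A a b" by (rule mreach_transfer[OF H1 aA])
    then have "mreach F Z (anc F ({a,b} \<union> Z)) a b" by (simp only: aF)
    then have "Good F Z a b b" by (rule lemma2[OF ab])
    then show ?thesis using ab unfolding Good_def by blast
  qed
  have 2: "\<exists>m. wk E Z a b m" if "wk F Z a b m" for m
  proof -
    have "mreach F Z (anc F ({a,b} \<union> Z)) a b" by (rule lemma1_final[OF irrF that])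
    then have "mreach F Z ?A a b" by (simp only: aF)
    then have "mreach E Z ?A a b" by (rule mreach_transfer[OF H2 aA])
    then have "Good E Z a b b" by (rule lemma2[OF ab])
    then show ?thesis using ab unfolding Good_def by blast
  qed
  have "(\<not> d_separated E a b Z) = (\<not> d_separated F a b Z)"
    unfolding dsep_wk using 1 2 by blast
  then show ?thesis by simp
qed

definition CE :: "'a list \<Rightarrow> ('a \<times> 'a) set" where
  "CE c = {(c!i, c!(Suc i mod length c)) | i. i < length c}"

definition K :: "('a \<times> 'a) set \<Rightarrow> 'a \<Rightarrow> 'a set" where
  "K G v = insert v {x. (x,v) \<in> G}"

lemma modlt: "i < length c \<Longrightarrow> k mod length c < length c"
  by (metis gr_zeroI less_nat_zero_code mod_less_divisor)

lemma sucmod: "i < l \<Longrightarrow> Suc i mod l = (if Suc i = l then 0 else Suc i)"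
  by auto

lemma CE_sub: "is_cycle G c \<Longrightarrow> CE c \<subseteq> G"
proof
  fix p assume cy: "is_cycle G c" and p: "p \<in> CE c"
  then obtain i where i: "i < length c" "p = (c!i, c!(Suc i mod length c))" by (auto simp: CE_def)
  show "p \<in> G"
  proof (cases "Suc i < length c")
    case True then show ?thesis using cy i by (auto simp: is_cycle_def)
  next
    case False
    then have "i = length c - 1" using i by auto
    then have "c!i = last c" "c!(Suc i mod length c) = hd c" using i cy
      by (auto simp: is_cycle_def last_conv_nth hd_conv_nth)
    then show ?thesis using cy i by (auto simp: is_cycle_def)
  qed
qed

lemma CE_set: "(w,v) \<in> CE c \<Longrightarrow> w \<in> set c \<and> v \<in> set c"
  by (auto simp: CE_def intro!: nth_mem dest: modlt)

lemma CE_fun: "distinct c \<Longrightarrow> (w,v) \<in> CE c \<Longrightarrow> (w,v') \<in> CE c \<Longrightarrow> v = v'"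
  by (auto simp: CE_def nth_eq_iff_index_eq dest: modlt)

lemma CE_inj: "distinct c \<Longrightarrow> (w,v) \<in> CE c \<Longrightarrow> (w',v) \<in> CE c \<Longrightarrow> w = w'"
proof -
  assume d: "distinct c" and a: "(w,v) \<in> CE c" "(w',v) \<in> CE c"
  then obtain i j where ij: "i < length c" "j < length c" "w = c!i" "w' = c!j"
    "c!(Suc i mod length c) = c!(Suc j mod length c)"
    by (auto simp: CE_def)
  then have "Suc i mod length c = Suc j mod length c" using d modlt[OF ij(1)]
    by (simp add: nth_eq_iff_index_eq)
  then have "i = j" using ij
    using sucmod[OF ij(1)] sucmod[OF ij(2)] by (auto split: if_splits)
  then show ?thesis using ij by simp
qed

lemma CE_out: "w \<in> set c \<Longrightarrow> \<exists>v. (w,v) \<in> CE c"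
  by (auto simp: CE_def in_set_conv_nth)

lemma CE_in: "v \<in> set c \<Longrightarrow> \<exists>w. (w,v) \<in> CE c"
proof -
  assume "v \<in> set c"
  then obtain j where j: "j < length c" "v = c!j" by (auto simp: in_set_conv_nth)
  define i where "i = (j + length c - 1) mod length c"
  have "i < length c" using j modlt[OF j(1)] by (simp add: i_def)
  moreover have "Suc i mod length c = j"
  proof -
    have "Suc i mod length c = Suc (j + length c - 1) mod length c"
      by (simp add: i_def mod_Suc_eq)
    also have "Suc (j + length c - 1) = j + length c" using j by auto
    finally show ?thesis using j by simp
  qed
  ultimately show ?thesis using j unfolding CE_def by blast
qed

lemma CE_neq: "distinct c \<Longrightarrow> length c \<ge> 2 \<Longrightarrow> (w,v) \<in> CE c \<Longrightarrow> w \<noteq> v"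
proof -
  assume d: "distinct c" "length c \<ge> 2" "(w,v) \<in> CE c"
  then obtain i where i: "i < length c" "w = c!i" "v = c!(Suc i mod length c)" by (auto simp: CE_def)
  have "Suc i mod length c \<noteq> i"
  proof (cases "Suc i < length c")
    case True then show ?thesis by simp
  next
    case False then have "Suc i = length c" using i by auto
    then show ?thesis using d by auto
  qed
  then show ?thesis using d i modlt[OF i(1)] by (simp add: nth_eq_iff_index_eq)
qed

lemma CE_conn_aux:
  assumes "CE c \<subseteq> R" "i < length c"
  shows "(c!i, c!((i+n) mod length c)) \<in> R\<^sup>*"
proof (induction n)
  case 0 then show ?case using assms by simp
next
  case (Suc n)
  let ?j = "(i+n) mod length c"
  have "?j < length c" using assms modlt by metis
  then have "(c!?j, c!(Suc ?j mod length c)) \<in> R" using assms unfolding CE_def by blast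
  moreover have "Suc ?j mod length c = (i + Suc n) mod length c" by (simp add: mod_Suc_eq)
  ultimately show ?case using Suc by (metis rtrancl.rtrancl_into_rtrancl)
qed

lemma CE_conn:
  assumes "CE c \<subseteq> R" "u \<in> set c" "v \<in> set c"
  shows "(u,v) \<in> R\<^sup>*"
proof -
  obtain i j where ij: "i < length c" "j < length c" "u = c!i" "v = c!j"
    using assms by (auto simp: in_set_conv_nth)
  have "(i + (j + length c - i)) mod length c = j" using ij by simp
  then show ?thesis using CE_conn_aux[OF assms(1) ij(1), of "j + length c - i"] ij by simp
qed

lemma CE_conn_rev:
  assumes "(CE c)\<inverse> \<subseteq> R" "u \<in> set c" "v \<in> set c"
  shows "(u,v) \<in> R\<^sup>*"
proof -
  have "CE c \<subseteq> R\<inverse>" using assms by auto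
  then have "(v,u) \<in> (R\<inverse>)\<^sup>*" using CE_conn assms by metis
  then show ?thesis by (simp add: rtrancl_converse)
qed

lemma madj_K:
  assumes "x \<in> A" "y \<in> A"
  shows "madj E A x y \<longleftrightarrow> x \<noteq> y \<and> (\<exists>c\<in>A. x \<in> K E c \<and> y \<in> K E c)"
  using assms unfolding madj_def K_def by blast

lemma FAM:
  assumes out: "\<forall>y. y \<notin> S \<longrightarrow> K F y = K G y"
    and s1: "\<forall>y\<in>S. \<exists>y'\<in>S. K G y \<subseteq> K F y'"
    and s2: "\<forall>y\<in>S. \<exists>y'\<in>S. K F y \<subseteq> K G y'"
    and conn: "\<forall>u\<in>S. \<forall>v\<in>S. (u,v) \<in> G\<^sup>*"
  shows "\<forall>x\<in>anc G X. \<forall>y\<in>anc G X. madj G (anc G X) x y = madj F (anc G X) x y"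
proof (intro ballI)
  fix x y assume xy: "x \<in> anc G X" "y \<in> anc G X"
  let ?A = "anc G X"
  have "(\<exists>c\<in>?A. x \<in> K G c \<and> y \<in> K G c) \<longleftrightarrow> (\<exists>c\<in>?A. x \<in> K F c \<and> y \<in> K F c)"
  proof
    assume "\<exists>c\<in>?A. x \<in> K G c \<and> y \<in> K G c"
    then obtain c where c: "c \<in> ?A" "x \<in> K G c" "y \<in> K G c" by blast
    show "\<exists>c\<in>?A. x \<in> K F c \<and> y \<in> K F c"
    proof (cases "c \<in> S")
      case False then show ?thesis using c out by auto
    next
      case True
      then obtain y' where y': "y' \<in> S" "K G c \<subseteq> K F y'" using s1 by blast
      have "y' \<in> ?A" using anc_rt[OF _ c(1)] conn y'(1) True by blast
      then show ?thesis using y' c by blast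
    qed
  next
    assume "\<exists>c\<in>?A. x \<in> K F c \<and> y \<in> K F c"
    then obtain c where c: "c \<in> ?A" "x \<in> K F c" "y \<in> K F c" by blast
    show "\<exists>c\<in>?A. x \<in> K G c \<and> y \<in> K G c"
    proof (cases "c \<in> S")
      case False then show ?thesis using c out by auto
    next
      case True
      then obtain y' where y': "y' \<in> S" "K F c \<subseteq> K G y'" using s2 by blast
      have "y' \<in> ?A" using anc_rt[OF _ c(1)] conn y'(1) True by blast
      then show ?thesis using y' c by blast
    qed
  qed
  then show "madj G ?A x y = madj F ?A x y" using madj_K[OF xy, of G] madj_K[OF xy, of F] by simp
qed

lemma equiv_from_FAM:
  assumes "dcg V G" "dcg V F"
    and out: "\<forall>y. y \<notin> S \<longrightarrow> K F y = K G y"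
    and s1: "\<forall>y\<in>S. \<exists>y'\<in>S. K G y \<subseteq> K F y'"
    and s2: "\<forall>y\<in>S. \<exists>y'\<in>S. K F y \<subseteq> K G y'"
    and conn: "\<forall>u\<in>S. \<forall>v\<in>S. (u,v) \<in> G\<^sup>*"
    and r1: "G \<subseteq> F\<^sup>*" and r2: "F \<subseteq> G\<^sup>*"
  shows "markov_equiv V G F"
proof -
  have rt: "G\<^sup>* = F\<^sup>*"
    using r1 r2 by (metis rtrancl_subset_rtrancl subset_antisym)
  have irr: "\<forall>v. (v,v) \<notin> G" "\<forall>v. (v,v) \<notin> F" using assms(1,2) by (auto simp: dcg_def)
  show ?thesis unfolding markov_equiv_def
    using general_equiv[OF irr rt FAM[OF out s1 s2 conn]] by blast
qed

definition M1 :: "'a list \<Rightarrow> ('a \<times> 'a) set \<Rightarrow> ('a \<times> 'a) set" where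
  "M1 c G = {(x,y). (x,y) \<in> G \<and> y \<notin> set c} \<union>
            {(x,w). \<exists>v. (w,v) \<in> CE c \<and> (x,v) \<in> G \<and> x \<noteq> w} \<union> (CE c)\<inverse>"

definition M2 :: "'a list \<Rightarrow> ('a \<times> 'a) set \<Rightarrow> ('a \<times> 'a) set" where
  "M2 c G = G - {(c!1, c!0)}"

definition modc :: "'a list \<Rightarrow> ('a \<times> 'a) set \<Rightarrow> ('a \<times> 'a) set" where
  "modc c G = (if M1 c G = G then M2 c G else M1 c G)"

lemma K_out_M1: "y \<notin> set c \<Longrightarrow> K (M1 c G) y = K G y"
  by (auto simp: K_def M1_def dest: CE_set)

lemma K_M1:
  assumes cy: "is_cycle G c" and l: "length c \<ge> 3" and wv: "(w,v) \<in> CE c"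
  shows "K (M1 c G) w = K G v"
proof -
  have d: "distinct c" using cy by (simp add: is_cycle_def)
  have wS: "w \<in> set c" using CE_set[OF wv] by simp
  have wvG: "(w,v) \<in> G" using CE_sub[OF cy] wv by auto
  have "{x. (x,w) \<in> M1 c G} = {x. (x,v) \<in> G \<and> x \<noteq> w} \<union> {v}"
  proof (intro set_eqI iffI)
    fix x assume "x \<in> {x. (x,w) \<in> M1 c G}"
    then consider "(x,w) \<in> G \<and> w \<notin> set c" | v' where "(w,v') \<in> CE c" "(x,v') \<in> G" "x \<noteq> w"
      | "(w,x) \<in> CE c"
      by (auto simp: M1_def)
    then show "x \<in> {x. (x,v) \<in> G \<and> x \<noteq> w} \<union> {v}"
    proof cases
      case 1 then show ?thesis using wS by simp
    next
      case 2 then show ?thesis using CE_fun[OF d wv] by auto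
    next
      case 3 then show ?thesis using CE_fun[OF d wv] by auto
    qed
  next
    fix x assume "x \<in> {x. (x,v) \<in> G \<and> x \<noteq> w} \<union> {v}"
    then show "x \<in> {x. (x,w) \<in> M1 c G}" using wv by (auto simp: M1_def)
  qed
  then show ?thesis using wvG by (auto simp: K_def)
qed

lemma M1_props:
  assumes dg: "dcg V G" and cy: "is_cycle G c" and l: "length c \<ge> 3"
  shows "dcg V (M1 c G) \<and> markov_equiv V G (M1 c G)"
proof -
  let ?F = "M1 c G"
  have d: "distinct c" using cy by (simp add: is_cycle_def)
  have ceG: "CE c \<subseteq> G" by (rule CE_sub[OF cy])
  have GV: "G \<subseteq> V \<times> V" "finite V" "\<forall>v. (v,v) \<notin> G" using dg unfolding dcg_def by blast+
  have SV: "set c \<subseteq> V"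
  proof
    fix w assume w: "w \<in> set c"
    obtain v where v: "(w,v) \<in> CE c" using CE_out[OF w] by blast
    have "(w,v) \<in> G" using ceG v by blast
    then show "w \<in> V" using GV(1) by blast
  qed
  have conn: "\<forall>u\<in>set c. \<forall>v\<in>set c. (u,v) \<in> G\<^sup>*"
    using CE_conn[OF ceG] by (intro ballI)
  have revF: "(CE c)\<inverse> \<subseteq> ?F" by (auto simp: M1_def)
  have connF: "\<forall>u\<in>set c. \<forall>v\<in>set c. (u,v) \<in> ?F\<^sup>*"
    using CE_conn_rev[OF revF] by (intro ballI)
  have dF: "dcg V ?F"
  proof -
    have "?F \<subseteq> V \<times> V"
    proof
      fix p assume "p \<in> ?F"
      then consider "p \<in> G" | x w v where "p = (x,w)" "(w,v) \<in> CE c" "(x,v) \<in> G"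
        | w v where "p = (v,w)" "(w,v) \<in> CE c"
        unfolding M1_def by blast
      then show "p \<in> V \<times> V"
      proof cases
        case 1 then show ?thesis using GV by auto
      next
        case 2 then show ?thesis using GV SV CE_set[OF 2(2)] by auto
      next
        case 3 then show ?thesis using SV CE_set[OF 3(2)] by auto
      qed
    qed
    moreover have "\<forall>v. (v,v) \<notin> ?F"
    proof (intro allI notI)
      fix v assume "(v,v) \<in> ?F"
      then consider "(v,v) \<in> G" | "(v,v) \<in> CE c"
        unfolding M1_def by blast
      then show False
      proof cases
        case 1 then show ?thesis using GV by auto
      next
        case 2 then show ?thesis using CE_neq[OF d _ 2] l by auto
      qed
    qed
    ultimately show ?thesis using GV by (simp add: dcg_def)
  qed
  have out: "\<forall>y. y \<notin> set c \<longrightarrow> K ?F y = K G y" using K_out_M1 by (intro allI impI)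
  have s1: "\<forall>y\<in>set c. \<exists>y'\<in>set c. K G y \<subseteq> K ?F y'"
  proof
    fix y assume y: "y \<in> set c"
    obtain w where w: "(w,y) \<in> CE c" using CE_in[OF y] by blast
    have "K ?F w = K G y" by (rule K_M1[OF cy l w])
    moreover have "w \<in> set c" using CE_set[OF w] by simp
    ultimately show "\<exists>y'\<in>set c. K G y \<subseteq> K ?F y'" by auto
  qed
  have s2: "\<forall>y\<in>set c. \<exists>y'\<in>set c. K ?F y \<subseteq> K G y'"
  proof
    fix y assume y: "y \<in> set c"
    obtain v where v: "(y,v) \<in> CE c" using CE_out[OF y] by blast
    have "K ?F y = K G v" by (rule K_M1[OF cy l v])
    moreover have "v \<in> set c" using CE_set[OF v] by simp
    ultimately show "\<exists>y'\<in>set c. K ?F y \<subseteq> K G y'" by auto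
  qed
  have r2: "?F \<subseteq> G\<^sup>*"
  proof
    fix p assume "p \<in> ?F"
    then consider "p \<in> G" | x w v where "p = (x,w)" "(w,v) \<in> CE c" "(x,v) \<in> G"
      | w v where "p = (v,w)" "(w,v) \<in> CE c"
      unfolding M1_def by blast
    then show "p \<in> G\<^sup>*"
    proof cases
      case 1 then show ?thesis by auto
    next
      case 2 then show ?thesis using conn CE_set[OF 2(2)]
        by (meson converse_rtrancl_into_rtrancl)
    next
      case 3 then show ?thesis using conn CE_set[OF 3(2)] by auto
    qed
  qed
  have r1: "G \<subseteq> ?F\<^sup>*"
  proof
    fix p assume pG: "p \<in> G"
    obtain x y where p: "p = (x,y)" by (cases p)
    show "p \<in> ?F\<^sup>*"
    proof (cases "y \<in> set c")
      case False then show ?thesis using pG p by (auto simp: M1_def)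
    next
      case True
      then obtain w where w: "(w,y) \<in> CE c" using CE_in[of y c] by blast
      have wy: "(w,y) \<in> ?F\<^sup>*" using connF CE_set[OF w] by simp
      show ?thesis
      proof (cases "x = w")
        case True then show ?thesis using wy p by simp
      next
        case False
        then have "(x,w) \<in> ?F" using w pG p by (auto simp: M1_def)
        then show ?thesis using wy p by (meson converse_rtrancl_into_rtrancl)
      qed
    qed
  qed
  show ?thesis using dF equiv_from_FAM[OF dg dF out s1 s2 conn r1 r2] by simp
qed

lemma M2_props:
  assumes dg: "dcg V G" and cy: "is_cycle G c" and l: "length c \<ge> 3" and fix1: "M1 c G = G"
  shows "dcg V (M2 c G) \<and> markov_equiv V G (M2 c G) \<and> M2 c G \<noteq> G"
proof -
  let ?F = "M2 c G"
  have d: "distinct c" using cy by (simp add: is_cycle_def)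
  have ceG: "CE c \<subseteq> G" by (rule CE_sub[OF cy])
  have GV: "G \<subseteq> V \<times> V" "finite V" "\<forall>v. (v,v) \<notin> G" using dg unfolding dcg_def by blast+
  have c01: "(c!0, c!1) \<in> CE c" using l unfolding CE_def by force
  have cne: "c \<noteq> []" using l by auto
  have n01: "c!1 \<noteq> c!0" using d l nth_eq_iff_index_eq[of c 1 0] cne by simp
  have c0S: "c!0 \<in> set c" "c!1 \<in> set c" using l by (auto intro!: nth_mem)
  have KK: "K G (c!0) = K G (c!1)"
    using K_M1[OF cy l c01] fix1 by simp
  have e10: "(c!1, c!0) \<in> G"
  proof -
    have "c!1 \<in> K G (c!0)" using KK by (simp add: K_def)
    then show ?thesis using n01 by (simp add: K_def)
  qed
  have ne: "?F \<noteq> G" using e10 by (auto simp: M2_def)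
  have conn: "\<forall>u\<in>set c. \<forall>v\<in>set c. (u,v) \<in> G\<^sup>*"
    using CE_conn[OF ceG] by (intro ballI)
  have ceF: "CE c \<subseteq> ?F"
  proof
    fix p assume p: "p \<in> CE c"
    have "p \<noteq> (c!1, c!0)"
    proof
      assume eq: "p = (c!1, c!0)"
      then have "(c!1, c!0) \<in> CE c" using p by simp
      moreover have "(c!1, c!2) \<in> CE c" using l unfolding CE_def
        by (intro CollectI exI[of _ 1]) (auto simp: numeral_2_eq_2)
      ultimately have "c!0 = c!2" by (rule CE_fun[OF d])
      then show False using d l nth_eq_iff_index_eq[of c 0 2] cne by simp
    qed
    then show "p \<in> ?F" using p ceG by (auto simp: M2_def)
  qed
  have connF: "\<forall>u\<in>set c. \<forall>v\<in>set c. (u,v) \<in> ?F\<^sup>*"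
    using CE_conn[OF ceF] by (intro ballI)
  have dF: "dcg V ?F" using dg by (auto simp: dcg_def M2_def)
  have out: "\<forall>y. y \<notin> set c \<longrightarrow> K ?F y = K G y" using c0S by (auto simp: K_def M2_def)
  have s1: "\<forall>y\<in>set c. \<exists>y'\<in>set c. K G y \<subseteq> K ?F y'"
  proof
    fix y assume yS: "y \<in> set c"
    show "\<exists>y'\<in>set c. K G y \<subseteq> K ?F y'"
    proof (cases "y = c!0")
      case True
      have "K ?F (c!1) = K G (c!1)" using n01 by (auto simp: K_def M2_def)
      then show ?thesis using True KK c0S by (intro bexI[of _ "c!1"]) auto
    next
      case False
      have "K ?F y = K G y" using False by (auto simp: K_def M2_def)
      then show ?thesis using yS by auto
    qed
  qed
  have s2: "\<forall>y\<in>set c. \<exists>y'\<in>set c. K ?F y \<subseteq> K G y'"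
    by (auto simp: K_def M2_def)
  have r2: "?F \<subseteq> G\<^sup>*" by (auto simp: M2_def)
  have r1: "G \<subseteq> ?F\<^sup>*"
  proof
    fix p assume pG: "p \<in> G"
    show "p \<in> ?F\<^sup>*"
    proof (cases "p = (c!1, c!0)")
      case True then show ?thesis using connF c0S by auto
    next
      case False then show ?thesis using pG by (auto simp: M2_def)
    qed
  qed
  show ?thesis using dF ne equiv_from_FAM[OF dg dF out s1 s2 conn r1 r2] by simp
qed

lemma modc_props:
  assumes "dcg V G" "is_cycle G c" "length c \<ge> 3"
  shows "dcg V (modc c G) \<and> markov_equiv V G (modc c G) \<and> modc c G \<noteq> G"
  using M1_props[OF assms] M2_props[OF assms] by (auto simp: modc_def)

definition agree :: "'a set \<Rightarrow> ('a \<times> 'a) set \<Rightarrow> ('a \<times> 'a) set \<Rightarrow> bool" where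
  "agree S G G' \<longleftrightarrow> (\<forall>x y. y \<in> S \<longrightarrow> ((x,y) \<in> G \<longleftrightarrow> (x,y) \<in> G'))"

lemma M1_out: "y \<notin> set c \<Longrightarrow> ((x,y) \<in> M1 c G \<longleftrightarrow> (x,y) \<in> G)"
  by (auto simp: M1_def dest: CE_set)

lemma M2_out: "length c \<ge> 3 \<Longrightarrow> y \<notin> set c \<Longrightarrow> ((x,y) \<in> M2 c G \<longleftrightarrow> (x,y) \<in> G)"
proof -
  assume "length c \<ge> 3" "y \<notin> set c"
  then have "y \<noteq> c!0" by (metis nth_mem less_le_trans zero_less_numeral)
  then show ?thesis by (auto simp: M2_def)
qed

lemma modc_out: "length c \<ge> 3 \<Longrightarrow> y \<notin> set c \<Longrightarrow> ((x,y) \<in> modc c G \<longleftrightarrow> (x,y) \<in> G)"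
  using M1_out[of y c x G] M2_out[of c y x G] by (simp add: modc_def)

lemma eq_iff_agree:
  assumes "\<forall>x y. y \<notin> S \<longrightarrow> ((x,y) \<in> A \<longleftrightarrow> (x,y) \<in> B)"
  shows "A = B \<longleftrightarrow> agree S A B"
proof
  assume "agree S A B"
  then have "\<forall>x y. (x,y) \<in> A \<longleftrightarrow> (x,y) \<in> B" using assms unfolding agree_def by blast
  then show "A = B" by auto
qed (simp add: agree_def)

lemma agree_M1: "agree (set c) G G' \<Longrightarrow> agree (set c) (M1 c G) (M1 c G')"
  unfolding agree_def M1_def by (auto dest: CE_set)

lemma agree_M2: "agree (set c) G G' \<Longrightarrow> agree (set c) (M2 c G) (M2 c G')"
  unfolding agree_def M2_def by auto

lemma agree_modc:
  assumes l: "length c \<ge> 3" and ag: "agree (set c) G G'"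
  shows "agree (set c) (modc c G) (modc c G')"
proof -
  have o1: "\<forall>x y. y \<notin> set c \<longrightarrow> ((x,y) \<in> M1 c G \<longleftrightarrow> (x,y) \<in> G)" using M1_out by (intro allI impI)
  have o2: "\<forall>x y. y \<notin> set c \<longrightarrow> ((x,y) \<in> M1 c G' \<longleftrightarrow> (x,y) \<in> G')" using M1_out by (intro allI impI)
  have a1: "agree (set c) (M1 c G) (M1 c G')" by (rule agree_M1[OF ag])
  have "(M1 c G = G) \<longleftrightarrow> (M1 c G' = G')"
    unfolding eq_iff_agree[OF o1] eq_iff_agree[OF o2]
    using a1 ag unfolding agree_def by blast
  then show ?thesis using agree_M2[OF ag] a1 by (simp add: modc_def)
qed

lemma cycle_agree:
  assumes "is_cycle G c" "agree (set c) G G'"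
  shows "is_cycle G' c"
proof -
  have n: "c \<noteq> []" "distinct c" using assms by (auto simp: is_cycle_def)
  have "\<forall>i. Suc i < length c \<longrightarrow> (c ! i, c ! Suc i) \<in> G'"
  proof (intro allI impI)
    fix i assume i: "Suc i < length c"
    then have "(c ! i, c ! Suc i) \<in> G" using assms(1) by (auto simp: is_cycle_def)
    moreover have "c ! Suc i \<in> set c" using i by (rule nth_mem)
    ultimately show "(c ! i, c ! Suc i) \<in> G'" using assms(2) unfolding agree_def by blast
  qed
  moreover have "(last c, hd c) \<in> G'"
  proof -
    have "(last c, hd c) \<in> G" using assms(1) by (auto simp: is_cycle_def)
    moreover have "hd c \<in> set c" using n by simp
    ultimately show ?thesis using assms(2) unfolding agree_def by blast
  qed
  ultimately show ?thesis using n by (simp add: is_cycle_def)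
qed

definition ET :: "'a list list \<Rightarrow> ('a \<times> 'a) set \<Rightarrow> nat set \<Rightarrow> ('a \<times> 'a) set" where
  "ET cs E T = {(x,y). (x,y) \<in> E \<and> (\<forall>i\<in>T. y \<notin> set (cs!i))} \<union>
     (\<Union>i\<in>T. {(x,y). (x,y) \<in> modc (cs!i) E \<and> y \<in> set (cs!i)})"

lemma ET_loc:
  assumes disj: "\<forall>i < k. \<forall>j < k. i \<noteq> j \<longrightarrow> set (cs ! i) \<inter> set (cs ! j) = {}"
    and T: "T \<subseteq> {..<k}" and i: "i < k" and y: "y \<in> set (cs!i)"
  shows "(x,y) \<in> ET cs E T \<longleftrightarrow> (if i \<in> T then (x,y) \<in> modc (cs!i) E else (x,y) \<in> E)"
proof -
  have "\<forall>j\<in>T. j \<noteq> i \<longrightarrow> y \<notin> set (cs!j)"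
  proof (intro ballI impI)
    fix j assume j: "j \<in> T" "j \<noteq> i"
    then have "j < k" using T by auto
    then have "set (cs ! i) \<inter> set (cs ! j) = {}" using disj i j(2) by simp
    then show "y \<notin> set (cs!j)" using y by auto
  qed
  then show ?thesis unfolding ET_def using y by auto
qed

lemma ET_insert:
  assumes disj: "\<forall>i < k. \<forall>j < k. i \<noteq> j \<longrightarrow> set (cs ! i) \<inter> set (cs ! j) = {}"
    and T: "T \<subseteq> {..<k}" and i: "i < k" "i \<notin> T"
    and l: "length (cs!i) \<ge> 3"
  shows "modc (cs!i) (ET cs E T) = ET cs E (insert i T)"
proof -
  have ag: "agree (set (cs!i)) (ET cs E T) E"
    unfolding agree_def using ET_loc[OF disj T i(1)] i(2) by simp
  have ag2: "agree (set (cs!i)) (modc (cs!i) (ET cs E T)) (modc (cs!i) E)"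
    by (rule agree_modc[OF l ag])
  have T': "insert i T \<subseteq> {..<k}" using T i by auto
  show ?thesis
  proof (intro set_eqI)
    fix p :: "'a \<times> 'a"
    obtain x y where p: "p = (x,y)" by (cases p)
    show "p \<in> modc (cs!i) (ET cs E T) \<longleftrightarrow> p \<in> ET cs E (insert i T)"
    proof (cases "y \<in> set (cs!i)")
      case True
      then show ?thesis using ag2 ET_loc[OF disj T' i(1) True] p unfolding agree_def by simp
    next
      case False
      then have "p \<in> modc (cs!i) (ET cs E T) \<longleftrightarrow> p \<in> ET cs E T" using modc_out[OF l] p by simp
      also have "\<dots> \<longleftrightarrow> p \<in> ET cs E (insert i T)" using False p unfolding ET_def by auto
      finally show ?thesis .
    qed
  qed
qed

lemma ET_empty: "ET cs E {} = E"
  unfolding ET_def by auto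

lemma markov_trans: "markov_equiv V A B \<Longrightarrow> markov_equiv V B C \<Longrightarrow> markov_equiv V A C"
  unfolding markov_equiv_def by blast

lemma ET_props:
  assumes dg: "dcg V E"
    and cyc: "\<forall>c \<in> set cs. is_cycle E c \<and> length c \<ge> 3"
    and k: "length cs = k"
    and disj: "\<forall>i < k. \<forall>j < k. i \<noteq> j \<longrightarrow> set (cs ! i) \<inter> set (cs ! j) = {}"
  shows "finite T \<Longrightarrow> T \<subseteq> {..<k} \<Longrightarrow> dcg V (ET cs E T) \<and> markov_equiv V E (ET cs E T)"
proof (induction T rule: finite_induct)
  case empty
  then show ?case using dg by (simp add: ET_empty markov_equiv_def)
next
  case (insert i T)
  then have T: "T \<subseteq> {..<k}" and i: "i < k" by auto
  have ci: "cs!i \<in> set cs" using i k by simp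
  have l: "length (cs!i) \<ge> 3" and cy: "is_cycle E (cs!i)" using cyc ci by auto
  have ag: "agree (set (cs!i)) E (ET cs E T)"
    unfolding agree_def using ET_loc[OF disj T i] insert(2) by simp
  have cy': "is_cycle (ET cs E T) (cs!i)" by (rule cycle_agree[OF cy ag])
  have IH: "dcg V (ET cs E T)" "markov_equiv V E (ET cs E T)" using insert T by auto
  have "dcg V (modc (cs!i) (ET cs E T)) \<and> markov_equiv V (ET cs E T) (modc (cs!i) (ET cs E T))"
    using modc_props[OF IH(1) cy' l] by simp
  moreover have "modc (cs!i) (ET cs E T) = ET cs E (insert i T)"
    by (rule ET_insert[OF disj T i insert(2) l])
  ultimately show ?case using markov_trans[OF IH(2)] by simp
qed

lemma ET_inj:
  assumes dg: "dcg V E"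
    and cyc: "\<forall>c \<in> set cs. is_cycle E c \<and> length c \<ge> 3"
    and k: "length cs = k"
    and disj: "\<forall>i < k. \<forall>j < k. i \<noteq> j \<longrightarrow> set (cs ! i) \<inter> set (cs ! j) = {}"
  shows "inj_on (ET cs E) (Pow {..<k})"
proof (rule inj_onI)
  fix T T' assume T: "T \<in> Pow {..<k}" and T': "T' \<in> Pow {..<k}" and eq: "ET cs E T = ET cs E T'"
  show "T = T'"
  proof (rule ccontr)
    assume "T \<noteq> T'"
    then obtain i where i: "i \<in> T \<and> i \<notin> T' \<or> i \<in> T' \<and> i \<notin> T" by blast
    then have ik: "i < k" using T T' by auto
    have ci: "cs!i \<in> set cs" using ik k by simp
    have l: "length (cs!i) \<ge> 3" and cy: "is_cycle E (cs!i)" using cyc ci by auto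
    have ne: "modc (cs!i) E \<noteq> E" using modc_props[OF dg cy l] by simp
    have o: "\<forall>x y. y \<notin> set (cs!i) \<longrightarrow> ((x,y) \<in> modc (cs!i) E \<longleftrightarrow> (x,y) \<in> E)"
      using modc_out[OF l] by (intro allI impI)
    have nag: "\<not> agree (set (cs!i)) (modc (cs!i) E) E" using ne eq_iff_agree[OF o] by simp
    have TT: "T \<subseteq> {..<k}" "T' \<subseteq> {..<k}" using T T' by auto
    have "agree (set (cs!i)) (ET cs E T) (ET cs E T')" using eq by (simp add: agree_def)
    then have "agree (set (cs!i)) (modc (cs!i) E) E"
      using i ET_loc[OF disj TT(1) ik] ET_loc[OF disj TT(2) ik] unfolding agree_def by auto
    then show False using nag by simp
  qed
qed

theorem mainTheorem13:
  fixes V :: "'a set" and E :: "('a \<times> 'a) set" and cs :: "'a list list" and k :: nat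
  assumes "dcg V E"
    and "length cs = k"
    and "\<forall>c \<in> set cs. is_cycle E c \<and> length c \<ge> 3"
    and "\<forall>i < k. \<forall>j < k. i \<noteq> j \<longrightarrow> set (cs ! i) \<inter> set (cs ! j) = {}"
  shows "card (MEC V E) \<ge> 2 ^ k"
proof -
  have sub: "ET cs E ` Pow {..<k} \<subseteq> MEC V E"
  proof
    fix G assume "G \<in> ET cs E ` Pow {..<k}"
    then obtain T where T: "T \<subseteq> {..<k}" "G = ET cs E T" by auto
    have "finite T" using T(1) finite_subset by blast
    then show "G \<in> MEC V E" using ET_props[OF assms(1) assms(3) assms(2) assms(4) _ T(1)] T(2)
      by (simp add: MEC_def)
  qed
  have fin: "finite (MEC V E)"
  proof -
    have "finite V" using assms(1) by (simp add: dcg_def)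
    then have "finite (Pow (V \<times> V))" by simp
    moreover have "MEC V E \<subseteq> Pow (V \<times> V)" by (auto simp: MEC_def dcg_def)
    ultimately show ?thesis by (rule finite_subset[rotated])
  qed
  have "card (ET cs E ` Pow {..<k}) = card (Pow {..<k::nat})"
    by (rule card_image[OF ET_inj[OF assms(1) assms(3) assms(2) assms(4)]])
  also have "\<dots> = 2 ^ k" by (simp add: card_Pow)
  finally have "card (ET cs E ` Pow {..<k}) = 2 ^ k" .
  then show ?thesis using card_mono[OF fin sub] by simp
qed

end
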